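(* Let $\Lambda\subset\mathbb{R}^d$ be a full-rank lattice, let $\Delta\in\mathbb{R}^d$, and let $P_\Delta=(\Lambda+\Delta)\cap[0,1)^d$. If $|P_\Delta|\ge 2$, then \[ \rho(P_{\Delta})\le \begin{cases} 2\sqrt{d}\, \rho(\Lambda) & \text{if } h(\Lambda)\ge 1/2,\\ (1+\sqrt{d})\,\rho(\Lambda) & \text{otherwise.}\end{cases} \]
   Context: For a finite point set $P\subset[0,1]^d$ with at least two points: covering radius $h(P)=\sup_{x\in[0,1]^d}\min_{y\in P}\|x-y\|_2$, separation radius $q(P)=\frac12\min_{x,y\in P,\,x\ne y}\|x-y\|_2$, mesh ratio $\rho(P)=h(P)/q(P)$. For a full-rank lattice $\Lambda\subset\mathbb{R}^d$: $h(\Lambda)=\sup_{x\in\mathbb{R}^d}\min_{y\in\Lambda}\|x-y\|_2$, $q(\Lambda)=\frac12\min_{x\in\Lambda\setminus\{0\}}\|x\|_2$, $\rho(\Lambda)=h(\Lambda)/q(\Lambda)$. *)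

theory Defs
  imports "HOL-Analysis.Analysis"
begin

definition lattice_gen :: "'a::euclidean_space set \<Rightarrow> 'a set" where
  "lattice_gen B = {(\<Sum>b\<in>B. of_int (c b) *\<^sub>R b) | c. True}"

definition full_rank_lattice :: "'a::euclidean_space set \<Rightarrow> bool" where
  "full_rank_lattice L \<longleftrightarrow>
     (\<exists>B. independent B \<and> card B = DIM('a) \<and> L = lattice_gen B)"

definition unit_cube_ho :: "'a::euclidean_space set" where
  "unit_cube_ho = {x. \<forall>i\<in>Basis. 0 \<le> x \<bullet> i \<and> x \<bullet> i < 1}"

text \<open>Point set quantities (P finite, at least two points); covering over [0,1]^d.\<close>
definition cov_rad_set :: "'a::euclidean_space set \<Rightarrow> real" where
  "cov_rad_set P = (SUP x\<in>cbox 0 One. INF y\<in>P. dist x y)"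

definition sep_rad_set :: "'a::euclidean_space set \<Rightarrow> real" where
  "sep_rad_set P = Min {dist x y | x y. x \<in> P \<and> y \<in> P \<and> x \<noteq> y} / 2"

definition mesh_ratio_set :: "'a::euclidean_space set \<Rightarrow> real" where
  "mesh_ratio_set P = cov_rad_set P / sep_rad_set P"

definition cov_rad_lat :: "'a::euclidean_space set \<Rightarrow> real" where
  "cov_rad_lat L = (SUP x\<in>UNIV. INF y\<in>L. dist x y)"

definition sep_rad_lat :: "'a::euclidean_space set \<Rightarrow> real" where
  "sep_rad_lat L = Inf (norm ` (L - {0})) / 2"

definition mesh_ratio_lat :: "'a::euclidean_space set \<Rightarrow> real" where
  "mesh_ratio_lat L = cov_rad_lat L / sep_rad_lat L"

end

theory Submission
  imports Defs
begin

lemma lattice_genI: "v = (\<Sum>b\<in>B. of_int (c b) *\<^sub>R b) \<Longrightarrow> v \<in> lattice_gen B"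
  unfolding lattice_gen_def by blast

lemma lin_conv: "Vector_Spaces.linear (*\<^sub>R) (*) (f::'a::real_vector \<Rightarrow> real) \<Longrightarrow> linear f"
  by (force simp: linear_def real_scaleR_def[abs_def])

lemma lattice_gen_diff:
  assumes "a \<in> lattice_gen B" "b \<in> lattice_gen B"
  shows "a - b \<in> lattice_gen B"
proof -
  obtain c1 where a: "a = (\<Sum>b\<in>B. of_int (c1 b) *\<^sub>R b)" using assms(1) unfolding lattice_gen_def by blast
  obtain c2 where b: "b = (\<Sum>b\<in>B. of_int (c2 b) *\<^sub>R b)" using assms(2) unfolding lattice_gen_def by blast
  have "a - b = (\<Sum>x\<in>B. of_int ((\<lambda>y. c1 y - c2 y) x) *\<^sub>R x)"
    unfolding a b by (simp add: sum_subtractf[symmetric] scaleR_diff_left)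
  then show ?thesis by (rule lattice_genI)
qed

lemma lattice_gen_zero: "0 \<in> lattice_gen B"
proof -
  show ?thesis by (rule lattice_genI[where c="\<lambda>y. 0"]) simp
qed

lemma lattice_gen_mem: assumes "finite B" "b0 \<in> B" shows "b0 \<in> lattice_gen B"
proof -
  have "(\<Sum>x\<in>B. of_int (if x = b0 then 1 else 0::int) *\<^sub>R x) = (\<Sum>x\<in>B. if x = b0 then x else 0)"
    by (intro sum.cong) auto
  also have "\<dots> = b0" using assms by simp
  finally show ?thesis by (intro lattice_genI[where c="\<lambda>x. if x = b0 then 1 else 0"]) simp
qed

lemma lattice_cover:
  fixes B :: "'a::euclidean_space set"
  assumes "independent B" "finite B" "span B = UNIV"
  shows "\<exists>y\<in>lattice_gen B. dist x y \<le> (\<Sum>b\<in>B. norm b)"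
proof -
  define r where "r b = representation B x b" for b
  have x: "x = (\<Sum>b\<in>B. r b *\<^sub>R b)"
    unfolding r_def using assms by (simp add: real_vector.sum_representation_eq)
  define y where "y = (\<Sum>b\<in>B. of_int (floor (r b)) *\<^sub>R b)"
  have yL: "y \<in> lattice_gen B" unfolding y_def by (rule lattice_genI[where c="\<lambda>b. floor (r b)"]) simp
  have xy: "x - y = (\<Sum>b\<in>B. (r b - of_int (floor (r b))) *\<^sub>R b)"
    unfolding x y_def by (simp add: sum_subtractf[symmetric] scaleR_diff_left)
  have "norm (x - y) \<le> (\<Sum>b\<in>B. norm ((r b - of_int (floor (r b))) *\<^sub>R b))"
    unfolding xy by (rule norm_sum)
  also have "\<dots> \<le> (\<Sum>b\<in>B. norm b)"
  proof (intro sum_mono)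
    fix b assume "b \<in> B"
    have "\<bar>r b - of_int (floor (r b))\<bar> \<le> 1"
      using floor_correct[of "r b"] unfolding abs_le_iff of_int_add of_int_1 by linarith
    from mult_right_mono[OF this norm_ge_zero[of b]]
    show "norm ((r b - of_int (floor (r b))) *\<^sub>R b) \<le> norm b"
      by (simp only: norm_scaleR mult_1_left)
  qed
  finally have nb: "norm (x - y) \<le> (\<Sum>b\<in>B. norm b)" .
  show ?thesis using yL nb unfolding dist_norm by blast
qed

lemma lattice_discrete:
  fixes B :: "'a::euclidean_space set"
  assumes ind: "independent B" and fin: "finite B" and sp: "span B = UNIV"
  shows "\<exists>m>0. \<forall>v\<in>lattice_gen B - {0}. m \<le> norm v"
proof -
  have "\<forall>b\<in>B. \<exists>K. \<forall>v. norm (representation B v b) \<le> K * norm v"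
  proof
    fix b assume "b \<in> B"
    have "linear (\<lambda>v. representation B v b)"
      by (rule lin_conv, rule real_vector.linear_representation[OF ind sp])
    then show "\<exists>K. \<forall>v. norm (representation B v b) \<le> K * norm v" by (rule linear_bounded)
  qed
  then obtain K where K: "\<And>b v. b \<in> B \<Longrightarrow> \<bar>representation B v b\<bar> \<le> K b * norm v"
    by (metis real_norm_def)
  define M where "M = 1 + (\<Sum>b\<in>B. \<bar>K b\<bar>)"
  have M1: "M \<ge> 1" unfolding M_def by (simp add: sum_nonneg)
  have KM: "K b \<le> M" if "b \<in> B" for b
  proof -
    have "K b \<le> \<bar>K b\<bar>" by simp
    also have "\<dots> \<le> (\<Sum>b\<in>B. \<bar>K b\<bar>)" using that fin by (intro member_le_sum) auto
    finally show ?thesis unfolding M_def by simp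
  qed
  have "\<forall>v\<in>lattice_gen B - {0}. 1 / M \<le> norm v"
  proof
    fix v assume v: "v \<in> lattice_gen B - {0}"
    then obtain c where vc: "v = (\<Sum>b\<in>B. of_int (c b) *\<^sub>R b)" unfolding lattice_gen_def by blast
    have "\<exists>b0\<in>B. c b0 \<noteq> 0"
    proof (rule ccontr)
      assume "\<not> ?thesis"
      then have "v = 0" unfolding vc by simp
      then show False using v by simp
    qed
    then obtain b0 where b0: "b0 \<in> B" "c b0 \<noteq> 0" by blast
    have rep: "representation B v b0 = of_int (c b0)"
    proof -
      have "representation B v = (\<lambda>b. \<Sum>i\<in>B. representation B (of_int (c i) *\<^sub>R i) b)"
        unfolding vc using ind sp by (intro real_vector.representation_sum) auto
      then have "representation B v b0 = (\<Sum>i\<in>B. of_int (c i) * representation B i b0)"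
        using ind sp by (simp add: real_vector.representation_scale)
      also have "\<dots> = (\<Sum>i\<in>B. of_int (c i) * (if b0 = i then 1 else 0))"
        using ind by (intro sum.cong) (auto simp: real_vector.representation_basis)
      also have "\<dots> = of_int (c b0)" using b0 fin by (simp add: if_distrib cong: if_cong)
      finally show ?thesis .
    qed
    have "1 \<le> \<bar>real_of_int (c b0)\<bar>" using b0(2) by linarith
    also have "\<dots> \<le> K b0 * norm v" using K[OF b0(1), of v] rep by simp
    also have "\<dots> \<le> M * norm v" using KM[OF b0(1)] by (simp add: mult_right_mono)
    finally show "1 / M \<le> norm v" using M1 by (simp add: divide_simps mult.commute)
  qed
  then show ?thesis using M1 by (intro exI[of _ "1/M"]) auto
qed

lemma norm_bound:
  fixes v :: "'a::euclidean_space"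
  assumes "\<forall>i\<in>Basis. \<bar>v \<bullet> i\<bar> \<le> M"
  shows "norm v \<le> sqrt (real DIM('a)) * M"
proof -
  obtain i0 :: 'a where "i0 \<in> Basis" using nonempty_Basis by blast
  then have M0: "0 \<le> M" using assms by (meson abs_ge_zero order_trans)
  have "v \<bullet> v = (\<Sum>i\<in>Basis. v \<bullet> i * (v \<bullet> i))" by (rule euclidean_inner)
  also have "\<dots> \<le> (\<Sum>i\<in>(Basis::'a set). M * M)"
  proof (intro sum_mono)
    fix i :: 'a assume "i \<in> Basis"
    then have a: "\<bar>v \<bullet> i\<bar> \<le> M" using assms by blast
    have "\<bar>v \<bullet> i\<bar> * \<bar>v \<bullet> i\<bar> \<le> M * M" by (rule mult_mono[OF a a]) (auto simp: M0)
    then show "v \<bullet> i * (v \<bullet> i) \<le> M * M" by (metis abs_mult_self_eq)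
  qed
  also have "\<dots> = real DIM('a) * (M * M)" by simp
  finally have "sqrt (v \<bullet> v) \<le> sqrt (real DIM('a) * (M * M))" by (rule real_sqrt_le_mono)
  then show ?thesis using M0 by (simp add: norm_eq_sqrt_inner real_sqrt_mult)
qed


lemma full_rank_basis:
  fixes L :: "'a::euclidean_space set"
  assumes "full_rank_lattice L"
  obtains B where "independent B" "finite B" "span B = UNIV" "L = lattice_gen B" "B \<noteq> {}"
proof -
  obtain B where B: "independent B" "card B = DIM('a)" "L = lattice_gen B"
    using assms unfolding full_rank_lattice_def by blast
  have fin: "finite B" using B(2) DIM_positive card.infinite by (metis less_irrefl)
  have "dim B = DIM('a)" using B by (simp add: dim_eq_card_independent)
  then have "span B = UNIV" by (simp add: dim_eq_full)
  moreover have "B \<noteq> {}" using B(2) DIM_positive by (metis card.empty less_irrefl)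
  ultimately show ?thesis using that B fin by blast
qed

theorem mainTheorem4:
  fixes L :: "'a::euclidean_space set" and \<Delta> :: 'a
  assumes "full_rank_lattice L"
    and "card ((\<lambda>y. y + \<Delta>) ` L \<inter> unit_cube_ho) \<ge> 2"
  shows "mesh_ratio_set ((\<lambda>y. y + \<Delta>) ` L \<inter> unit_cube_ho)
         \<le> (if cov_rad_lat L \<ge> 1/2
             then 2 * sqrt (real DIM('a)) * mesh_ratio_lat L
             else (1 + sqrt (real DIM('a))) * mesh_ratio_lat L)"
proof -
  obtain B where ind: "independent B" and fin: "finite B" and sp: "span B = UNIV"
    and LB: "L = lattice_gen B" and Bne: "B \<noteq> {}"
    using full_rank_basis[OF assms(1)] by blast
  define P where "P = (\<lambda>y. y + \<Delta>) ` L \<inter> unit_cube_ho"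
  have cardP: "card P \<ge> 2" using assms(2) unfolding P_def .
  have finP: "finite P" using cardP card.infinite by force
  have Pne: "P \<noteq> {}" using cardP by auto
  have L0: "0 \<in> L" unfolding LB by (rule lattice_gen_zero)
  have Ldiff: "a - b \<in> L" if "a \<in> L" "b \<in> L" for a b
    using that unfolding LB by (rule lattice_gen_diff)
  define h where "h = cov_rad_lat L"
  define q where "q = sep_rad_lat L"
  define K where "K = (\<Sum>b\<in>B. norm b)"
  have cover: "\<exists>y\<in>L. dist x y \<le> K" for x
    unfolding LB K_def by (rule lattice_cover[OF ind fin sp])
  have bddb: "bdd_below ((\<lambda>y. dist x y) ` A)" for x :: 'a and A
    by (rule bdd_belowI[of _ 0]) auto
  have infK: "(INF y\<in>L. dist x y) \<le> K" for x
  proof -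
    obtain y where "y \<in> L" "dist x y \<le> K" using cover by blast
    then show ?thesis using cINF_lower[OF bddb, of y L x] by linarith
  qed
  have bddL: "bdd_above (range (\<lambda>x. INF y\<in>L. dist x y))"
  proof (rule bdd_aboveI)
    fix t assume "t \<in> range (\<lambda>x. INF y\<in>L. dist x y)"
    then show "t \<le> K" using infK by auto
  qed
  have hupper: "(INF y\<in>L. dist x y) \<le> h" for x
    unfolding h_def cov_rad_lat_def by (rule cSUP_upper[OF UNIV_I bddL])
  have h0: "0 \<le> h"
  proof -
    have "0 \<le> (INF y\<in>L. dist 0 y)" using L0 by (intro cINF_greatest) auto
    then show ?thesis using hupper[of 0] by linarith
  qed
  obtain m where m0: "m > 0" and mle: "\<And>v. v \<in> L - {0} \<Longrightarrow> m \<le> norm v"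
    using lattice_discrete[OF ind fin sp] unfolding LB by blast
  obtain b0 where b0: "b0 \<in> B" using Bne by blast
  have b0L: "b0 \<in> L - {0}" using lattice_gen_mem[OF fin b0] ind b0 LB
    by (auto dest: real_vector.dependent_zero)
  have Lne: "L - {0} \<noteq> {}" using b0L by blast
  have bddn: "bdd_below (norm ` (L - {0}))" by (rule bdd_belowI[of _ 0]) auto
  have qpos: "q > 0"
  proof -
    have "m \<le> Inf (norm ` (L - {0}))" using Lne mle by (intro cInf_greatest) auto
    then show ?thesis unfolding q_def sep_rad_lat_def using m0 by simp
  qed
  have qP: "q \<le> sep_rad_set P"
  proof -
    define S where "S = {dist x y | x y. x \<in> P \<and> y \<in> P \<and> x \<noteq> y}"
    have "S \<subseteq> (\<lambda>(x,y). dist x y) ` (P \<times> P)" unfolding S_def by auto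
    then have finS: "finite S" using finP by (meson finite_SigmaI finite_imageI finite_subset)
    obtain x1 x2 where "x1 \<in> P" "x2 \<in> P" "x1 \<noteq> x2"
      using cardP by (metis One_nat_def Suc_1 card_le_Suc_iff insert_iff numeral_2_eq_2)
    then have Sne: "S \<noteq> {}" unfolding S_def by blast
    have "2 * q \<le> Min S"
    proof (rule Min.boundedI[OF finS Sne])
      fix s assume "s \<in> S"
      then obtain x y where xy: "s = dist x y" "x \<in> P" "y \<in> P" "x \<noteq> y" unfolding S_def by blast
      then obtain a b where ab: "a \<in> L" "b \<in> L" "x = a + \<Delta>" "y = b + \<Delta>" unfolding P_def by blast
      have "a - b \<in> L - {0}" using Ldiff[OF ab(1,2)] ab xy by auto
      then have "Inf (norm ` (L - {0})) \<le> norm (a - b)" by (intro cInf_lower[OF _ bddn]) auto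
      moreover have "s = norm (a - b)" using xy ab by (simp add: dist_norm)
      ultimately show "2 * q \<le> s" unfolding q_def sep_rad_lat_def by simp
    qed
    then show ?thesis unfolding sep_rad_set_def S_def by simp
  qed
  define C where "C = (if h \<ge> 1/2 then 2 * sqrt (real DIM('a)) else 1 + sqrt (real DIM('a)))"
  have C0: "C \<ge> 0" unfolding C_def by simp
  have pointwise: "(INF y\<in>P. dist x y) \<le> C * h" if x: "x \<in> cbox 0 One" for x
  proof (cases "h \<ge> 1/2")
    case True
    obtain p where p: "p \<in> P" using Pne by blast
    have "\<forall>i\<in>Basis. \<bar>(x - p) \<bullet> i\<bar> \<le> 1"
    proof
      fix i :: 'a assume i: "i \<in> Basis"
      have "0 \<le> x \<bullet> i" "x \<bullet> i \<le> 1" using x i by (auto simp: mem_box)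
      moreover have "0 \<le> p \<bullet> i" "p \<bullet> i < 1" using p i unfolding P_def unit_cube_ho_def by auto
      ultimately show "\<bar>(x - p) \<bullet> i\<bar> \<le> 1" by (simp add: inner_diff_left abs_le_iff)
    qed
    then have "norm (x - p) \<le> sqrt (real DIM('a)) * 1" by (rule norm_bound)
    also have "\<dots> \<le> 2 * sqrt (real DIM('a)) * h" using True by (simp add: mult_left_mono)
    finally have "dist x p \<le> C * h" using True unfolding C_def by (simp add: dist_norm)
    moreover have "(INF y\<in>P. dist x y) \<le> dist x p" by (rule cINF_lower[OF bddb p])
    ultimately show ?thesis by linarith
  next
    case False
    define d where "d = sqrt (real DIM('a))"
    define c :: 'a where "c = (1/2) *\<^sub>R One"
    have xc: "norm (x - c) \<le> d * (1/2)" unfolding d_def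
    proof (rule norm_bound, intro ballI)
      fix i :: 'a assume i: "i \<in> Basis"
      have "0 \<le> x \<bullet> i" "x \<bullet> i \<le> 1" using x i by (auto simp: mem_box)
      moreover have "(x - c) \<bullet> i = x \<bullet> i - 1/2" using i by (simp add: c_def inner_diff_left)
      ultimately show "\<bar>(x - c) \<bullet> i\<bar> \<le> 1/2" unfolding abs_le_iff by linarith
    qed
    have "(INF y\<in>P. dist x y) / (1 + d) \<le> h"
    proof (rule dense_ge_bounded[of h "1/2"])
      show "h < 1/2" using False by simp
    next
      fix w assume hw: "h < w" and w2: "w < 1/2"
      define x' where "x' = c + (1 - 2*w) *\<^sub>R (x - c)"
      have "(INF y\<in>L. dist (x' - \<Delta>) y) < w" using hupper[of "x' - \<Delta>"] hw by linarith
      then obtain y where yL: "y \<in> L" and yd: "dist (x' - \<Delta>) y < w"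
        using L0 by (subst (asm) cINF_less_iff[OF _ bddb]) auto
      define p where "p = y + \<Delta>"
      have px: "norm (p - x') < w" using yd unfolding p_def dist_norm
        by (metis add.commute diff_diff_eq2 diff_add_cancel norm_minus_commute)
      have pcube: "p \<in> unit_cube_ho" unfolding unit_cube_ho_def
      proof (intro CollectI ballI)
        fix i :: 'a assume i: "i \<in> Basis"
        have "0 \<le> x \<bullet> i" "x \<bullet> i \<le> 1" using x i by (auto simp: mem_box)
        define T where "T = (1 - 2*w) * (x \<bullet> i)"
        have a: "0 \<le> T" unfolding T_def using \<open>0 \<le> x \<bullet> i\<close> w2 by simp
        have b: "T \<le> (1 - 2*w)" unfolding T_def using \<open>x \<bullet> i \<le> 1\<close> w2
          by (simp add: mult_left_le_one_le)
        have x'i0: "x' \<bullet> i = 1/2 + (1 - 2*w) * (x \<bullet> i) - (1 - 2*w) / 2"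
          using i by (simp add: x'_def c_def inner_diff_left inner_add_left algebra_simps) (simp add: field_simps)
        then have x'i: "x' \<bullet> i = w + T" unfolding T_def by (simp add: field_simps)
        have "\<bar>(p - x') \<bullet> i\<bar> \<le> norm (p - x')" by (rule Basis_le_norm[OF i])
        then have "\<bar>p \<bullet> i - x' \<bullet> i\<bar> < w" using px by (simp add: inner_diff_left)
        then have e1: "p \<bullet> i - x' \<bullet> i < w" and e2: "x' \<bullet> i - p \<bullet> i < w" by auto
        show "0 \<le> p \<bullet> i \<and> p \<bullet> i < 1"
        proof
          show "0 \<le> p \<bullet> i" using a x'i e2 by linarith
          show "p \<bullet> i < 1" using b x'i e1 by linarith
        qed
      qed
      have pP: "p \<in> P" unfolding P_def using yL pcube unfolding p_def by blast
      have "x - x' = (2*w) *\<^sub>R (x - c)" unfolding x'_def by (simp add: algebra_simps)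
      then have "norm (x - x') = 2*w * norm (x - c)" using hw h0 by simp
      also have "\<dots> \<le> 2*w * (d * (1/2))" using xc hw h0 by (intro mult_left_mono) auto
      finally have "norm (x - x') \<le> w * d" by simp
      then have "dist x p < w * d + w" using px norm_triangle_lt[of "x - x'" "x' - p"]
        by (simp add: dist_norm norm_minus_commute)
      moreover have "(INF y\<in>P. dist x y) \<le> dist x p" by (rule cINF_lower[OF bddb pP])
      ultimately have "(INF y\<in>P. dist x y) \<le> w * (1 + d)" by (simp add: algebra_simps)
      moreover have "1 + d > 0" unfolding d_def by (simp add: add_pos_nonneg)
      ultimately show "(INF y\<in>P. dist x y) / (1 + d) \<le> w" by (simp add: divide_le_eq)
    qed
    moreover have "1 + d > 0" unfolding d_def by (simp add: add_pos_nonneg)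
    ultimately have "(INF y\<in>P. dist x y) \<le> (1 + d) * h" by (simp add: divide_le_eq mult.commute)
    then show ?thesis using False unfolding C_def d_def by simp
  qed
  have hP: "cov_rad_set P \<le> C * h"
    unfolding cov_rad_set_def
  proof (rule cSUP_least)
    show "cbox 0 (One::'a) \<noteq> {}" by (simp add: box_ne_empty)
  qed (rule pointwise)
  have rhs: "(if cov_rad_lat L \<ge> 1/2
             then 2 * sqrt (real DIM('a)) * mesh_ratio_lat L
             else (1 + sqrt (real DIM('a))) * mesh_ratio_lat L) = C * (h / q)"
    unfolding C_def h_def q_def mesh_ratio_lat_def by simp
  have "mesh_ratio_set P \<le> C * (h / q)"
  proof (cases "cov_rad_set P \<ge> 0")
    case True
    have "mesh_ratio_set P = cov_rad_set P / sep_rad_set P" by (simp add: mesh_ratio_set_def)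
    also have "\<dots> \<le> cov_rad_set P / q" using True qpos qP by (intro divide_left_mono) auto
    also have "\<dots> \<le> C * h / q" using hP qpos by (intro divide_right_mono) auto
    finally show ?thesis by simp
  next
    case False
    have "sep_rad_set P > 0" using qpos qP by linarith
    then have "mesh_ratio_set P \<le> 0" using False unfolding mesh_ratio_set_def
      by (simp add: divide_nonpos_pos)
    also have "0 \<le> C * (h / q)" using C0 h0 qpos by simp
    finally show ?thesis .
  qed
  then show ?thesis unfolding P_def rhs .
qed

end
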